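(* Let $f \colon Q \twoheadrightarrow Q'$ be a partial surjection between finite sets. Then for every simple type $A$, $\mathrm{Reg}_{Q'}(A) \subseteq \mathrm{Reg}_Q(A)$ (as Boolean subalgebras of $\wp(\Lambda(A))$).
   Context: Simple types are generated from a base type $o$ by $\Rightarrow$; $\Lambda(A)$ is the set of closed simply typed $\lambda$-terms of type $A$ modulo $\beta\eta$. For a finite set $Q$: $[\![o]\!]_Q = Q$, $[\![A\Rightarrow B]\!]_Q$ = all functions $[\![A]\!]_Q \to [\![B]\!]_Q$, and $[\![M]\!]_Q \in [\![A]\!]_Q$ is the standard interpretation of $M$. $\mathrm{Reg}_Q(A) = \{\{M \in \Lambda(A) : [\![M]\!]_Q \in F\} : F \subseteq [\![A]\!]_Q\}$. A partial surjection $f \colon Q \twoheadrightarrow Q'$ is a relation that is the graph of a partial function surjective onto $Q'$. *)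

theory Defs
  imports Main "HOL-Library.FSet"
begin

datatype ty = Ob | Arr ty ty

datatype trm = Var nat | App trm trm | Lam ty trm

inductive typing :: "ty list \<Rightarrow> trm \<Rightarrow> ty \<Rightarrow> bool" where
  T_Var: "i < length G \<Longrightarrow> typing G (Var i) (G ! i)"
| T_App: "typing G s (Arr A B) \<Longrightarrow> typing G t A \<Longrightarrow> typing G (App s t) B"
| T_Lam: "typing (A # G) t B \<Longrightarrow> typing G (Lam A t) (Arr A B)"

definition closed_terms :: "ty \<Rightarrow> trm set" where
  "closed_terms A = {M. typing [] M A}"

text \<open>Semantic values: base elements, or functions given by their (finite) graph.\<close>
datatype 'q sem = Base 'q | Fn "('q sem \<times> 'q sem) fset"

text \<open>The full set-theoretic model: [[o]]_Q = Q, [[A => B]]_Q = all functions.\<close>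
fun sdom :: "'q set \<Rightarrow> ty \<Rightarrow> 'q sem set" where
  "sdom Q Ob = Base ` Q"
| "sdom Q (Arr A B) =
     {Fn g | g. \<exists>h. (\<forall>x\<in>sdom Q A. h x \<in> sdom Q B) \<and> fset g = (\<lambda>x. (x, h x)) ` sdom Q A}"

fun app :: "'q sem \<Rightarrow> 'q sem \<Rightarrow> 'q sem" where
  "app (Fn g) x = (THE y. (x, y) |\<in>| g)"
| "app (Base q) x = undefined"

fun eval :: "'q set \<Rightarrow> 'q sem list \<Rightarrow> trm \<Rightarrow> 'q sem" where
  "eval Q env (Var i) = env ! i"
| "eval Q env (App s t) = app (eval Q env s) (eval Q env t)"
| "eval Q env (Lam A t) = Fn (Abs_fset ((\<lambda>x. (x, eval Q (x # env) t)) ` sdom Q A))"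

definition interp :: "'q set \<Rightarrow> trm \<Rightarrow> 'q sem" where
  "interp Q M = eval Q [] M"

definition Reg :: "'q set \<Rightarrow> ty \<Rightarrow> trm set set" where
  "Reg Q A = {{M \<in> closed_terms A. interp Q M \<in> F} | F. F \<subseteq> sdom Q A}"

definition partial_surj :: "('a \<times> 'b) set \<Rightarrow> 'a set \<Rightarrow> 'b set \<Rightarrow> bool" where
  "partial_surj f Q Q' \<longleftrightarrow> f \<subseteq> Q \<times> Q' \<and> single_valued f \<and> Range f = Q'"

end

theory Submission
  imports Defs
begin

lemma sdom_finite: "finite Q \<Longrightarrow> finite (sdom Q A)"
proof (induction A)
  case Ob then show ?case by simp
next
  case (Arr A B)
  have "sdom Q (Arr A B) \<subseteq> (Fn \<circ> Abs_fset) ` Pow (sdom Q A \<times> sdom Q B)"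
  proof
    fix u assume "u \<in> sdom Q (Arr A B)"
    then obtain g h where u: "u = Fn g" "\<forall>x\<in>sdom Q A. h x \<in> sdom Q B"
      "fset g = (\<lambda>x. (x, h x)) ` sdom Q A" by auto
    then have "fset g \<in> Pow (sdom Q A \<times> sdom Q B)" by auto
    moreover have "u = (Fn \<circ> Abs_fset) (fset g)" using u by (metis comp_apply fset_inverse)
    ultimately show "u \<in> (Fn \<circ> Abs_fset) ` Pow (sdom Q A \<times> sdom Q B)" by blast
  qed
  then show ?case using Arr by (meson finite_SigmaI finite_imageI Finite_Set.finite_Pow_iff finite_subset)
qed

lemma app_graph:
  assumes "finite S" "x \<in> S"
  shows "app (Fn (Abs_fset ((\<lambda>x. (x, h x)) ` S))) x = h x"
proof -
  have "fset (Abs_fset ((\<lambda>x. (x, h x)) ` S)) = (\<lambda>x. (x, h x)) ` S"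
    using assms by (simp add: Abs_fset_inverse)
  then show ?thesis using assms by (auto intro!: the_equality)
qed

lemma sdom_arr_intro:
  assumes "finite Q" "\<forall>x\<in>sdom Q A. h x \<in> sdom Q B"
  shows "Fn (Abs_fset ((\<lambda>x. (x, h x)) ` sdom Q A)) \<in> sdom Q (Arr A B)"
proof -
  have "fset (Abs_fset ((\<lambda>x. (x, h x)) ` sdom Q A)) = (\<lambda>x. (x, h x)) ` sdom Q A"
  proof -
    have "finite (sdom Q A)" using sdom_finite assms(1) by blast
    then show ?thesis by (simp add: Abs_fset_inverse)
  qed
  then show ?thesis using assms by auto
qed

lemma sdom_arr_struct:
  assumes "u \<in> sdom Q (Arr A B)"
  shows "\<exists>g. u = Fn g \<and> fset g = (\<lambda>x. (x, app u x)) ` sdom Q A \<and> (\<forall>x\<in>sdom Q A. app u x \<in> sdom Q B)"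
proof -
  obtain g h where u: "u = Fn g" "\<forall>x\<in>sdom Q A. h x \<in> sdom Q B"
      "fset g = (\<lambda>x. (x, h x)) ` sdom Q A" using assms by auto
  have a: "app u x = h x" if "x \<in> sdom Q A" for x
    using u that by (auto intro!: the_equality)
  have "fset g = (\<lambda>x. (x, app u x)) ` sdom Q A" using u(3) a by auto
  then show ?thesis using u a by auto
qed

lemma sdom_ext:
  assumes "u1 \<in> sdom Q (Arr A B)" "u2 \<in> sdom Q (Arr A B)" "\<forall>x\<in>sdom Q A. app u1 x = app u2 x"
  shows "u1 = u2"
proof -
  obtain g1 where g1: "u1 = Fn g1" "fset g1 = (\<lambda>x. (x, app u1 x)) ` sdom Q A"
    using sdom_arr_struct[OF assms(1)] by blast
  obtain g2 where g2: "u2 = Fn g2" "fset g2 = (\<lambda>x. (x, app u2 x)) ` sdom Q A"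
    using sdom_arr_struct[OF assms(2)] by blast
  have "(\<lambda>x. (x, app u1 x)) ` sdom Q A = (\<lambda>x. (x, app u2 x)) ` sdom Q A"
    by (rule image_cong) (simp_all add: assms(3))
  then have "fset g1 = fset g2" by (simp only: g1(2) g2(2))
  then have "g1 = g2" by (simp only: fset_inject)
  then show ?thesis by (simp only: g1(1) g2(1))
qed

fun ne :: "bool \<Rightarrow> ty \<Rightarrow> bool" where
  "ne b Ob = b"
| "ne b (Arr A B) = (\<not> ne b A \<or> ne b B)"

lemma ne_True: "ne True B"
  by (induction B) auto

lemma sdom_empty: "finite Q \<Longrightarrow> (sdom Q A = {}) = (\<not> ne (Q \<noteq> {}) A)"
proof (induction A)
  case Ob then show ?case by simp
next
  case (Arr A B)
  show ?case
  proof (cases "sdom Q A \<noteq> {} \<and> sdom Q B = {}")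
    case True
    have "sdom Q (Arr A B) = {}"
      using True sdom_arr_struct by fastforce
    then show ?thesis using True Arr by simp
  next
    case False
    define h where "h = (\<lambda>x::'a sem. SOME y. y \<in> sdom Q B)"
    have "\<forall>x\<in>sdom Q A. h x \<in> sdom Q B" using False unfolding h_def by (auto intro: someI)
    then have "sdom Q (Arr A B) \<noteq> {}" using sdom_arr_intro[OF Arr.prems] by blast
    then show ?thesis using False Arr by auto
  qed
qed

lemma eval_sdom:
  assumes "finite Q"
  shows "typing G M T \<Longrightarrow> length env = length G \<Longrightarrow> (\<forall>i<length G. env ! i \<in> sdom Q (G ! i))
    \<Longrightarrow> eval Q env M \<in> sdom Q T"
proof (induction G M T arbitrary: env rule: typing.induct)
  case (T_Var i G) then show ?case by simp
next
  case (T_App G s A B t)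
  have a: "eval Q env s \<in> sdom Q (Arr A B)" by (rule T_App.IH(1)[OF T_App.prems(1,2)])
  have b: "eval Q env t \<in> sdom Q A" by (rule T_App.IH(2)[OF T_App.prems(1,2)])
  have "app (eval Q env s) (eval Q env t) \<in> sdom Q B" using sdom_arr_struct[OF a] b by blast
  then show ?case by (simp only: eval.simps)
next
  case (T_Lam A G t B)
  have "\<forall>x\<in>sdom Q A. eval Q (x # env) t \<in> sdom Q B"
  proof
    fix x assume "x \<in> sdom Q A"
    then show "eval Q (x # env) t \<in> sdom Q B"
      using T_Lam by (intro T_Lam.IH) (auto simp: nth_Cons split: nat.splits)
  qed
  then show ?case using sdom_arr_intro[OF assms] by simp
qed

context
  fixes Q :: "'a set" and Q' :: "'b set" and f :: "('a \<times> 'b) set"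
begin

fun LR :: "ty \<Rightarrow> ('a sem \<times> 'b sem) set" where
  "LR Ob = {(Base q, Base q') | q q'. (q, q') \<in> f}"
| "LR (Arr A B) = {(u, u'). u \<in> sdom Q (Arr A B) \<and> u' \<in> sdom Q' (Arr A B) \<and>
      (\<forall>x x'. (x, x') \<in> LR A \<longrightarrow> (app u x, app u' x') \<in> LR B)}"

lemma LR_props:
  assumes fin: "finite Q" "finite Q'" and ps: "partial_surj f Q Q'"
  shows "LR A \<subseteq> sdom Q A \<times> sdom Q' A \<and> single_valued (LR A) \<and> sdom Q' A \<subseteq> Range (LR A)"
proof (induction A)
  case Ob
  have fs: "f \<subseteq> Q \<times> Q'" and fsv: "single_valued f" using ps unfolding partial_surj_def by blast+
  have "LR Ob \<subseteq> sdom Q Ob \<times> sdom Q' Ob"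
  proof
    fix p assume "p \<in> LR Ob"
    then obtain q q' where "p = (Base q, Base q')" "(q, q') \<in> f" by auto
    then show "p \<in> sdom Q Ob \<times> sdom Q' Ob" using fs by auto
  qed
  moreover have "single_valued (LR Ob)"
  proof (rule single_valuedI)
    fix x y z assume "(x, y) \<in> LR Ob" "(x, z) \<in> LR Ob"
    then obtain q q1 q2 where "x = Base q" "y = Base q1" "z = Base q2" "(q, q1) \<in> f" "(q, q2) \<in> f"
      by auto
    then show "y = z" using fsv single_valuedD by metis
  qed
  moreover have "sdom Q' Ob \<subseteq> Range (LR Ob)"
  proof
    fix y assume "y \<in> sdom Q' Ob"
    then obtain q' where q': "y = Base q'" "q' \<in> Q'" by auto
    then obtain q where "(q, q') \<in> f" using ps unfolding partial_surj_def by blast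
    then have "(Base q, y) \<in> LR Ob" using q' by simp
    then show "y \<in> Range (LR Ob)" by blast
  qed
  ultimately show ?case by blast
next
  case (Arr A B)
  have A1: "LR A \<subseteq> sdom Q A \<times> sdom Q' A" and A2: "single_valued (LR A)"
    and A3: "sdom Q' A \<subseteq> Range (LR A)" using Arr.IH(1) by blast+
  have B1: "LR B \<subseteq> sdom Q B \<times> sdom Q' B" and B2: "single_valued (LR B)"
    and B3: "sdom Q' B \<subseteq> Range (LR B)" using Arr.IH(2) by blast+
  have sub: "LR (Arr A B) \<subseteq> sdom Q (Arr A B) \<times> sdom Q' (Arr A B)" unfolding LR.simps(2) by blast
  have sv: "single_valued (LR (Arr A B))"
  proof (rule single_valuedI)
    fix u u1 u2 assume h1: "(u, u1) \<in> LR (Arr A B)" and h2: "(u, u2) \<in> LR (Arr A B)"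
    have "\<forall>x'\<in>sdom Q' A. app u1 x' = app u2 x'"
    proof
      fix x' assume "x' \<in> sdom Q' A"
      then obtain x where "(x, x') \<in> LR A" using A3 by blast
      then have "(app u x, app u1 x') \<in> LR B" "(app u x, app u2 x') \<in> LR B" using h1 h2 unfolding LR.simps(2) by blast+
      then show "app u1 x' = app u2 x'" by (rule single_valuedD[OF B2])
    qed
    then show "u1 = u2" using h1 h2 sdom_ext[of u1 Q' A B u2] unfolding LR.simps(2) by blast
  qed
  have surj: "sdom Q' (Arr A B) \<subseteq> Range (LR (Arr A B))"
  proof
    fix u' assume u': "u' \<in> sdom Q' (Arr A B)"
    define h where "h = (\<lambda>x. if x \<in> Domain (LR A)
        then (SOME y. (y, app u' (THE x'. (x, x') \<in> LR A)) \<in> LR B)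
        else (SOME y. y \<in> sdom Q B))"
    have hB: "h x \<in> sdom Q B" if x: "x \<in> sdom Q A" for x
    proof (cases "x \<in> Domain (LR A)")
      case True
      then obtain x' where xx: "(x, x') \<in> LR A" by blast
      then have "(THE x'. (x, x') \<in> LR A) = x'" using A2 by (blast intro: the_equality dest: single_valuedD)
      moreover have "x' \<in> sdom Q' A" using xx A1 by blast
      then have "app u' x' \<in> sdom Q' B" using sdom_arr_struct[OF u'] by blast
      then have "\<exists>y. (y, app u' x') \<in> LR B" using B3 by blast
      ultimately have "(h x, app u' x') \<in> LR B" using True unfolding h_def using someI_ex[of "\<lambda>y. (y, app u' x') \<in> LR B"] by simp
      then show ?thesis using B1 by blast
    next
      case False
      have "sdom Q B \<noteq> {}"
      proof
        assume e: "sdom Q B = {}"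
        then have "\<not> ne (Q \<noteq> {}) B" using sdom_empty fin by blast
        then have Qe: "Q = {}" using ne_True by metis
        then have Q'e: "Q' = {}" using ps unfolding partial_surj_def by auto
        have "sdom Q' B = {}" using sdom_empty[OF fin(2), of B] Qe Q'e sdom_empty[OF fin(1), of B] e by simp
        then have "sdom Q' A = {}" using sdom_arr_struct[OF u'] by blast
        then have "sdom Q A = {}" using sdom_empty[OF fin(2), of A] Qe Q'e sdom_empty[OF fin(1), of A] by simp
        then show False using x by simp
      qed
      then show ?thesis using False unfolding h_def by (auto intro: someI)
    qed
    define u where "u = Fn (Abs_fset ((\<lambda>x. (x, h x)) ` sdom Q A))"
    have uin: "u \<in> sdom Q (Arr A B)" unfolding u_def using sdom_arr_intro[OF fin(1)] hB by blast
    have "(u, u') \<in> LR (Arr A B)"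
    proof -
      have "(app u x, app u' x') \<in> LR B" if xx: "(x, x') \<in> LR A" for x x'
      proof -
        have x: "x \<in> sdom Q A" using xx A1 by blast
        have "(THE x'. (x, x') \<in> LR A) = x'" using xx A2 by (blast intro: the_equality dest: single_valuedD)
        moreover have "x' \<in> sdom Q' A" using xx A1 by blast
        then have "app u' x' \<in> sdom Q' B" using sdom_arr_struct[OF u'] by blast
        then have "\<exists>y. (y, app u' x') \<in> LR B" using B3 by blast
        moreover have "x \<in> Domain (LR A)" using xx by blast
        ultimately have "(h x, app u' x') \<in> LR B" unfolding h_def using someI_ex[of "\<lambda>y. (y, app u' x') \<in> LR B"] by simp
        moreover have "app u x = h x" unfolding u_def using app_graph[OF sdom_finite[OF fin(1)] x] .
        ultimately show ?thesis by simp
      qed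
      then show ?thesis using uin u' unfolding LR.simps(2) by blast
    qed
    then show "u' \<in> Range (LR (Arr A B))" by blast
  qed
  show ?case by (intro conjI sub sv surj)
qed

lemma LR_fund:
  assumes fin: "finite Q" "finite Q'" and ps: "partial_surj f Q Q'"
  shows "typing G M T \<Longrightarrow> length env = length G \<Longrightarrow> length env' = length G \<Longrightarrow>
    (\<forall>i<length G. (env ! i, env' ! i) \<in> LR (G ! i))
    \<Longrightarrow> (eval Q env M, eval Q' env' M) \<in> LR T"
proof (induction G M T arbitrary: env env' rule: typing.induct)
  case (T_Var i G) then show ?case by simp
next
  case (T_App G s A B t)
  then have "(eval Q env s, eval Q' env' s) \<in> LR (Arr A B)" "(eval Q env t, eval Q' env' t) \<in> LR A" by auto
  then show ?case by simp
next
  case (T_Lam A G t B)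
  have envs: "\<forall>i<length G. env ! i \<in> sdom Q (G ! i)" "\<forall>i<length G. env' ! i \<in> sdom Q' (G ! i)"
    using T_Lam.prems LR_props[OF assms] by blast+
  have ty: "typing G (Lam A t) (Arr A B)" using T_Lam.hyps by (rule typing.T_Lam)
  have a: "eval Q env (Lam A t) \<in> sdom Q (Arr A B)"
    using eval_sdom[OF fin(1) ty] envs T_Lam.prems by simp
  have b: "eval Q' env' (Lam A t) \<in> sdom Q' (Arr A B)"
    using eval_sdom[OF fin(2) ty] envs T_Lam.prems by simp
  have c: "(app (eval Q env (Lam A t)) x, app (eval Q' env' (Lam A t)) x') \<in> LR B"
    if xx: "(x, x') \<in> LR A" for x x'
  proof -
    have x: "x \<in> sdom Q A" and x': "x' \<in> sdom Q' A" using xx LR_props[OF assms] by blast+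
    have "app (eval Q env (Lam A t)) x = eval Q (x # env) t"
      using app_graph[OF sdom_finite[OF fin(1)] x] by simp
    moreover have "app (eval Q' env' (Lam A t)) x' = eval Q' (x' # env') t"
      using app_graph[OF sdom_finite[OF fin(2)] x'] by simp
    moreover have "(eval Q (x # env) t, eval Q' (x' # env') t) \<in> LR B"
      using T_Lam.prems xx by (intro T_Lam.IH) (auto simp: nth_Cons split: nat.splits)
    ultimately show ?thesis by simp
  qed
  show ?case unfolding LR.simps(2) using a b c by blast
qed

end

theorem mainTheorem4:
  fixes Q :: "'a set" and Q' :: "'b set" and f :: "('a \<times> 'b) set"
  assumes "finite Q" and "finite Q'" and "partial_surj f Q Q'"
  shows "\<forall>A. Reg Q' A \<subseteq> Reg Q A"
proof (intro allI subsetI)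
  fix A S assume "S \<in> Reg Q' A"
  then obtain F' where F': "F' \<subseteq> sdom Q' A" "S = {M \<in> closed_terms A. interp Q' M \<in> F'}"
    unfolding Reg_def by blast
  let ?R = "LR Q Q' f A"
  define F where "F = {x \<in> sdom Q A. \<exists>x'\<in>F'. (x, x') \<in> ?R}"
  have LP: "?R \<subseteq> sdom Q A \<times> sdom Q' A \<and> single_valued ?R \<and> sdom Q' A \<subseteq> Range ?R"
    by (rule LR_props[OF assms])
  have p1: "?R \<subseteq> sdom Q A \<times> sdom Q' A" using LP by (rule conjunct1)
  have p2: "single_valued ?R" using LP by (metis conjunct1 conjunct2)
  have rel: "(interp Q M, interp Q' M) \<in> ?R" if "M \<in> closed_terms A" for M
  proof -
    have "typing [] M A" using that unfolding closed_terms_def by simp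
    then have "(eval Q [] M, eval Q' [] M) \<in> ?R" by (rule LR_fund[OF assms]) simp_all
    then show ?thesis unfolding interp_def .
  qed
  have eq: "(M \<in> S) = (M \<in> closed_terms A \<and> interp Q M \<in> F)" for M
  proof
    assume "M \<in> S"
    then have M: "M \<in> closed_terms A" "interp Q' M \<in> F'" using F'(2) by simp_all
    have r: "(interp Q M, interp Q' M) \<in> ?R" by (rule rel[OF M(1)])
    then have "interp Q M \<in> sdom Q A" using p1 by (auto dest: subsetD)
    then have "interp Q M \<in> F" unfolding F_def using M(2) r by blast
    then show "M \<in> closed_terms A \<and> interp Q M \<in> F" using M(1) by simp
  next
    assume M: "M \<in> closed_terms A \<and> interp Q M \<in> F"
    then obtain x' where x': "x' \<in> F'" "(interp Q M, x') \<in> ?R" unfolding F_def by blast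
    have r: "(interp Q M, interp Q' M) \<in> ?R" using rel M by blast
    have "interp Q' M = x'" using single_valuedD[OF p2 r x'(2)] .
    then show "M \<in> S" using F'(2) M x'(1) by simp
  qed
  have "S = {M \<in> closed_terms A. interp Q M \<in> F}" using eq by blast
  moreover have "F \<subseteq> sdom Q A" unfolding F_def by blast
  ultimately show "S \<in> Reg Q A" unfolding Reg_def by blast
qed

end
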